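(* Let ${\tt G}$ be a connected digraph with exactly $n>2$ edges. If the path poset $P({\tt G})$ is isomorphic to $\mathbb B(n)$ with its maximum removed, then ${\tt G}\cong{\tt P}_{n-1}$.
   Context: A digraph ${\tt G}=(V,E)$ has finite $V$ and $E\subseteq (V\times V)\setminus\{(v,v)\}$; connected means the underlying undirected graph is connected. A multipath of ${\tt G}$ is a spanning subgraph (all vertices, subset of edges) each of whose components is an isolated vertex or a simple directed path (edges $e_1,\dots,e_k$ with target of $e_i$ equal to source of $e_{i+1}$, no repeated vertex, not a cycle); $P({\tt G})$ is the set of multipaths ordered by inclusion of edge sets. $\mathbb B(n)$ is the power set of $\{0,\dots,n-1\}$ ordered by inclusion. ${\tt P}_m$ is the coherently oriented polygon with vertices $v_0,\dots,v_m$ and edges $(v_i,v_{i+1})$, $0\le i<m$, and $(v_m,v_0)$ (so it has $m+1$ edges). *)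

theory Defs
  imports Main
begin

definition digraph :: "'a set \<Rightarrow> ('a \<times> 'a) set \<Rightarrow> bool" where
  "digraph V E \<longleftrightarrow> finite V \<and> E \<subseteq> V \<times> V \<and> (\<forall>v. (v, v) \<notin> E)"

definition dg_connected :: "'a set \<Rightarrow> ('a \<times> 'a) set \<Rightarrow> bool" where
  "dg_connected V E \<longleftrightarrow> (\<forall>u\<in>V. \<forall>v\<in>V. (u, v) \<in> (E \<union> E\<inverse>)\<^sup>*)"

definition comp_of :: "('a \<times> 'a) set \<Rightarrow> 'a \<Rightarrow> 'a set" where
  "comp_of F v = {u. (v, u) \<in> (F \<union> F\<inverse>)\<^sup>*}"

definition is_simple_dpath :: "('a \<times> 'a) set \<Rightarrow> 'a set \<Rightarrow> bool" where
  "is_simple_dpath F C \<longleftrightarrow> (\<exists>vs. distinct vs \<and> length vs \<ge> 2 \<and> set vs = C \<and>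
      {e \<in> F. fst e \<in> C} = set (zip vs (tl vs)))"

definition multipath :: "'a set \<Rightarrow> ('a \<times> 'a) set \<Rightarrow> ('a \<times> 'a) set \<Rightarrow> bool" where
  "multipath V E F \<longleftrightarrow> F \<subseteq> E \<and>
     (\<forall>v\<in>V. comp_of F v = {v} \<or> is_simple_dpath F (comp_of F v))"

definition path_poset :: "'a set \<Rightarrow> ('a \<times> 'a) set \<Rightarrow> ('a \<times> 'a) set set" where
  "path_poset V E = {F. multipath V E F}"

definition inclusion_iso :: "'a set set \<Rightarrow> 'b set set \<Rightarrow> bool" where
  "inclusion_iso P Q \<longleftrightarrow> (\<exists>f. bij_betw f P Q \<and> (\<forall>A\<in>P. \<forall>B\<in>P. A \<subseteq> B \<longleftrightarrow> f A \<subseteq> f B))"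

definition boolean_minus_top :: "nat \<Rightarrow> nat set set" where
  "boolean_minus_top n = Pow {0..<n} - {{0..<n}}"

definition polygon_V :: "nat \<Rightarrow> nat set" where
  "polygon_V m = {0..m}"
definition polygon_E :: "nat \<Rightarrow> (nat \<times> nat) set" where
  "polygon_E m = {(i, Suc i) | i. i < m} \<union> {(m, 0)}"

definition dg_iso :: "'a set \<Rightarrow> ('a \<times> 'a) set \<Rightarrow> 'b set \<Rightarrow> ('b \<times> 'b) set \<Rightarrow> bool" where
  "dg_iso V E W D \<longleftrightarrow> (\<exists>h. bij_betw h V W \<and>
     (\<forall>u\<in>V. \<forall>v\<in>V. (u, v) \<in> E \<longleftrightarrow> (h u, h v) \<in> D))"

end

theory Submission
  imports Defs
begin

lemma zip_tl_fst_unique: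
  assumes "distinct vs" "(x,y) \<in> set (zip vs (tl vs))" "(x,z) \<in> set (zip vs (tl vs))"
  shows "y = z"
proof -
  have "distinct (map fst (zip vs (tl vs)))" using assms(1) by (simp add: map_fst_zip_take)
  thus ?thesis using assms(2,3) eq_key_imp_eq_value by metis
qed

lemma zip_tl_snd_unique:
  assumes "distinct vs" "(y,x) \<in> set (zip vs (tl vs))" "(z,x) \<in> set (zip vs (tl vs))"
  shows "y = z"
proof -
  have "distinct (map snd (zip vs (tl vs)))" using assms(1) by (simp add: map_snd_zip_take distinct_tl)
  hence "distinct (map fst (zip (tl vs) vs))" by (simp add: map_fst_zip_take map_snd_zip_take)
  moreover have "(x,y) \<in> set (zip (tl vs) vs)" "(x,z) \<in> set (zip (tl vs) vs)"
    using assms(2,3) by (auto simp: set_zip)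
  ultimately show ?thesis using eq_key_imp_eq_value by metis
qed

lemma multipath_out_unique:
  assumes "multipath V E F" "digraph V E" "v \<in> V" "(v,w1) \<in> F" "(v,w2) \<in> F"
  shows "w1 = w2"
proof -
  have FE: "F \<subseteq> E" using assms(1) by (simp add: multipath_def)
  have "w1 \<in> comp_of F v" unfolding comp_of_def using assms(4) by auto
  moreover have "w1 \<noteq> v" using assms FE by (auto simp: digraph_def)
  ultimately have "comp_of F v \<noteq> {v}" by auto
  hence "is_simple_dpath F (comp_of F v)" using assms(1,3) by (auto simp: multipath_def)
  then obtain vs where d: "distinct vs" and eq: "{e \<in> F. fst e \<in> comp_of F v} = set (zip vs (tl vs))"
    unfolding is_simple_dpath_def by blast
  have vc: "v \<in> comp_of F v" by (simp add: comp_of_def)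
  have "(v,w1) \<in> {e \<in> F. fst e \<in> comp_of F v}" "(v,w2) \<in> {e \<in> F. fst e \<in> comp_of F v}"
    using vc assms(4,5) by simp_all
  hence "(v,w1) \<in> set (zip vs (tl vs))" "(v,w2) \<in> set (zip vs (tl vs))" unfolding eq .
  then show ?thesis by (rule zip_tl_fst_unique[OF d])
qed

lemma multipath_in_unique:
  assumes "multipath V E F" "digraph V E" "w \<in> V" "(u1,w) \<in> F" "(u2,w) \<in> F"
  shows "u1 = u2"
proof -
  have FE: "F \<subseteq> E" using assms(1) by (simp add: multipath_def)
  have u1: "u1 \<in> comp_of F w" unfolding comp_of_def using assms(4) by auto
  have u2: "u2 \<in> comp_of F w" unfolding comp_of_def using assms(5) by auto
  have "u1 \<noteq> w" using assms FE by (auto simp: digraph_def)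
  hence "comp_of F w \<noteq> {w}" using u1 by auto
  hence "is_simple_dpath F (comp_of F w)" using assms(1,3) by (auto simp: multipath_def)
  then obtain vs where d: "distinct vs" and eq: "{e \<in> F. fst e \<in> comp_of F w} = set (zip vs (tl vs))"
    unfolding is_simple_dpath_def by blast
  have "(u1,w) \<in> {e \<in> F. fst e \<in> comp_of F w}" "(u2,w) \<in> {e \<in> F. fst e \<in> comp_of F w}"
    using u1 u2 assms(4,5) by simp_all
  hence "(u1,w) \<in> set (zip vs (tl vs))" "(u2,w) \<in> set (zip vs (tl vs))" unfolding eq .
  then show ?thesis by (rule zip_tl_snd_unique[OF d])
qed

lemma poset_char:
  assumes "finite E" "card E = n" "n \<ge> 2" "inclusion_iso P (boolean_minus_top n)" "P \<subseteq> Pow E"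
  shows "P = Pow E - {E}"
proof -
  obtain f where bij: "bij_betw f P (boolean_minus_top n)" and ord: "\<forall>A\<in>P. \<forall>B\<in>P. A \<subseteq> B \<longleftrightarrow> f A \<subseteq> f B"
    using assms(4) unfolding inclusion_iso_def by blast
  have cB: "card (boolean_minus_top n) = 2^n - 1" unfolding boolean_minus_top_def
    by (simp add: card_Pow card_Diff_singleton)
  have cP: "card P = 2^n - 1" using bij_betw_same_card[OF bij] cB by simp
  have "E \<notin> P"
  proof
    assume EP: "E \<in> P"
    have *: "{0..<n} - {i} \<subseteq> f E" if "i < n" for i
    proof -
      have "i \<in> {0..<n}" using that by simp
      moreover have "i \<notin> {0..<n} - {i}" by simp
      ultimately have "{0..<n} - {i} \<noteq> {0..<n}" by blast
      moreover have "{0..<n} - {i} \<subseteq> {0..<n}" by blast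
      ultimately have "{0..<n} - {i} \<in> boolean_minus_top n" unfolding boolean_minus_top_def by blast
      hence "{0..<n} - {i} \<in> f ` P" using bij_betw_imp_surj_on[OF bij] by simp
      then obtain A where A: "A \<in> P" "f A = {0..<n} - {i}" by (elim imageE) simp
      have "A \<subseteq> E" using A(1) assms(5) by auto
      hence "f A \<subseteq> f E" using ord A(1) EP by blast
      thus ?thesis using A(2) by simp
    qed
    have "{0..<n} \<subseteq> f E"
    proof
      fix x assume x: "x \<in> {0..<n}"
      define i where "i = (if x = 0 then 1 else 0::nat)"
      have "i < n" "i \<noteq> x" using assms(3) x unfolding i_def by auto
      have "{0..<n} - {i} \<subseteq> f E" using \<open>i < n\<close> by (rule *)
      moreover have "x \<in> {0..<n} - {i}" using x \<open>i \<noteq> x\<close> by simp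
      ultimately show "x \<in> f E" by blast
    qed
    moreover have "f E \<in> boolean_minus_top n" using bij_betwE[OF bij] EP by blast
    hence "f E \<subseteq> {0..<n}" "f E \<noteq> {0..<n}" unfolding boolean_minus_top_def by blast+
    ultimately show False by blast
  qed
  hence "P \<subseteq> Pow E - {E}" using assms(5) by auto
  moreover have "card (Pow E - {E}) = 2^n - 1" using assms(1,2) by (simp add: card_Pow card_Diff_singleton)
  moreover have "finite (Pow E - {E})" using assms(1) by simp
  ultimately show ?thesis using card_subset_eq[of "Pow E - {E}" P] cP by simp
qed

lemma closed_reach:
  assumes "(u,v) \<in> (E \<union> E\<inverse>)\<^sup>*" "u \<in> A" "\<And>x y. (x,y) \<in> E \<Longrightarrow> x \<in> A \<longleftrightarrow> y \<in> A"
  shows "v \<in> A"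
  using assms(1,2) by (induction rule: rtrancl_induct) (use assms(3) in blast)+

lemma seq_back:
  assumes inn: "\<And>u1 u2 w. (u1,w) \<in> E \<Longrightarrow> (u2,w) \<in> E \<Longrightarrow> u1 = u2"
    and step: "\<And>i. i < k \<Longrightarrow> (a i, a (Suc i)) \<in> E"
    and "i < j" "j \<le> k" "a i = a j"
  shows "a 0 = a (j - i)"
  using assms(3-5)
proof (induction i arbitrary: j)
  case 0 thus ?case by simp
next
  case (Suc i)
  then obtain j' where j: "j = Suc j'" by (cases j) auto
  have "(a i, a (Suc i)) \<in> E" using Suc.prems by (intro step) linarith
  moreover have "(a j', a (Suc j')) \<in> E" using Suc.prems j by (intro step) linarith
  moreover have "a (Suc i) = a (Suc j')" using Suc.prems(3) j by simp
  ultimately have e2: "(a j', a (Suc i)) \<in> E" "(a i, a (Suc i)) \<in> E" by simp_all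
  have "a i = a j'" by (rule inn[OF e2(2) e2(1)])
  moreover have "i < j'" "j' \<le> k" using Suc.prems j by simp_all
  ultimately have "a 0 = a (j' - i)" using Suc.IH by blast
  thus ?case using j by simp
qed


lemma seq_inj:
  assumes inn: "\<And>u1 u2 w. (u1,w) \<in> E \<Longrightarrow> (u2,w) \<in> E \<Longrightarrow> u1 = u2"
    and step: "\<And>i. i < k \<Longrightarrow> (a i, a (Suc i)) \<in> E"
    and s: "a 0 \<notin> snd ` E"
  shows "inj_on a {0..k}"
proof -
  have nf: False if "i < j" "j \<le> k" "a i = a j" for i j
  proof -
    have "a 0 = a (j - i)" using seq_back[of E k a i j, OF inn step that] .
    define m where "m = j - i - 1"
    have m: "j - i = Suc m" using that(1) unfolding m_def by simp
    have "(a m, a (Suc m)) \<in> E" using m that by (intro step) linarith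
    hence "a (Suc m) \<in> snd ` E" by force
    thus False using s \<open>a 0 = a (j - i)\<close> m by simp
  qed
  show ?thesis
  proof (rule inj_onI)
    fix i j assume "i \<in> {0..k}" "j \<in> {0..k}" "a i = a j"
    hence ik: "i \<le> k" "j \<le> k" "a i = a j" by auto
    show "i = j"
    proof (rule ccontr)
      assume "i \<noteq> j"
      hence "i < j \<or> j < i" by linarith
      thus False
      proof
        assume "i < j" thus False using nf[of i j] ik by simp
      next
        assume "j < i" thus False using nf[of j i] ik by simp
      qed
    qed
  qed
qed

lemma caseB:
  assumes dg: "digraph V E" and con: "dg_connected V E"
    and out: "\<And>v w1 w2. (v,w1) \<in> E \<Longrightarrow> (v,w2) \<in> E \<Longrightarrow> w1 = w2"
    and inn: "\<And>u1 u2 w. (u1,w) \<in> E \<Longrightarrow> (u2,w) \<in> E \<Longrightarrow> u1 = u2"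
    and ne: "E \<noteq> {}" and sV: "s \<in> V" and sn: "s \<notin> snd ` E"
  shows "multipath V E E"
proof -
  have finV: "finite V" and EV: "E \<subseteq> V \<times> V" using dg by (auto simp: digraph_def)
  define sc where "sc v = (THE w. (v,w) \<in> E)" for v
  have sc: "(v, sc v) \<in> E" if vin: "v \<in> fst ` E" for v
  proof -
    obtain e where e: "e \<in> E" "v = fst e" using vin by blast
    obtain w where "(v,w) \<in> E" using e by (metis prod.collapse)
    hence "\<exists>!w. (v,w) \<in> E" using out by blast
    thus ?thesis unfolding sc_def by (rule theI')
  qed
  define a where "a i = (sc ^^ i) s" for i
  have aS: "a (Suc i) = sc (a i)" for i by (simp add: a_def)
  have a0: "a 0 = s" by (simp add: a_def)
  have ex: "\<exists>k. a k \<notin> fst ` E"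
  proof (rule ccontr)
    assume "\<not> ?thesis"
    hence all: "a k \<in> fst ` E" for k by blast
    have stp: "(a i, a (Suc i)) \<in> E" for i using sc[OF all[of i]] aS by simp
    have aV: "a i \<in> V" for i using all[of i] EV by force
    have "inj_on a {0..card V}" by (rule seq_inj[of E "card V" a]) (erule (1) inn, rule stp, simp add: a0 sn)
    hence "card (a ` {0..card V}) = Suc (card V)" by (simp add: card_image)
    moreover have "a ` {0..card V} \<subseteq> V" using aV by blast
    ultimately have "Suc (card V) \<le> card V" using card_mono[OF finV] by metis
    thus False by simp
  qed
  define k where "k = (LEAST k. a k \<notin> fst ` E)"
  have ak: "a k \<notin> fst ` E" unfolding k_def using ex by (metis LeastI)
  have lk: "a i \<in> fst ` E" if "i < k" for i using that not_less_Least unfolding k_def by blast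
  have stp: "(a i, a (Suc i)) \<in> E" if "i < k" for i using sc[OF lk[OF that]] aS by simp
  have aV: "a i \<in> V" if "i \<le> k" for i using that
  proof (induction i)
    case 0 thus ?case using a0 sV by simp
  next
    case (Suc i) thus ?case using stp[of i] EV by auto
  qed
  have inj: "inj_on a {0..k}" by (rule seq_inj[of E k a]) (erule (1) inn, erule stp, simp add: a0 sn)
  define vs where "vs = map a [0..<Suc k]"
  have dvs: "distinct vs" unfolding vs_def using inj
    by (simp add: distinct_map atLeastLessThanSuc_atLeastAtMost del: upt_Suc)
  have svs: "set vs = a ` {0..k}" unfolding vs_def
    by (simp add: atLeastLessThanSuc_atLeastAtMost del: upt_Suc)
  have clo: "x \<in> set vs \<longleftrightarrow> y \<in> set vs" if xy: "(x,y) \<in> E" for x y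
  proof
    assume "x \<in> set vs"
    then obtain i where i: "i \<le> k" "x = a i" using svs by auto
    have "i \<noteq> k" using ak i xy by force
    hence "i < k" using i by simp
    hence "y = a (Suc i)" using stp[of i] out xy i by blast
    thus "y \<in> set vs" using svs \<open>i < k\<close> by auto
  next
    assume "y \<in> set vs"
    then obtain i where i: "i \<le> k" "y = a i" using svs by auto
    have "i \<noteq> 0"
    proof
      assume "i = 0"
      hence "(x, s) \<in> E" using i a0 xy by simp
      hence "s \<in> snd ` E" by (simp add: rev_image_eqI)
      thus False using sn by simp
    qed
    then obtain m where m: "i = Suc m" by (cases i) auto
    hence "x = a m" using stp[of m] inn xy i by simp
    thus "x \<in> set vs" using svs m i by auto
  qed
  have setV: "set vs = V"
  proof
    show "set vs \<subseteq> V" using svs aV by auto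
    show "V \<subseteq> set vs"
    proof
      fix v assume "v \<in> V"
      hence "(s,v) \<in> (E \<union> E\<inverse>)\<^sup>*" using con sV by (simp add: dg_connected_def)
      moreover have "s \<in> set vs" using svs a0 by force
      ultimately show "v \<in> set vs" by (rule closed_reach[of s v E "set vs"]) (erule clo)
    qed
  qed
  have vsn: "vs ! i = a i" if "i < Suc k" for i
    unfolding vs_def using that by (subst nth_map_upt) auto
  have lvs: "length vs = Suc k" unfolding vs_def by simp
  have zipeq: "zip vs (tl vs) = map (\<lambda>i. (a i, a (Suc i))) [0..<k]"
  proof (rule nth_equalityI)
    show "length (zip vs (tl vs)) = length (map (\<lambda>i. (a i, a (Suc i))) [0..<k])" using lvs by simp
    fix i assume "i < length (zip vs (tl vs))"
    hence ik: "i < k" using lvs by simp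
    have "tl vs ! i = vs ! Suc i" using ik lvs by (simp add: nth_tl)
    thus "zip vs (tl vs) ! i = map (\<lambda>i. (a i, a (Suc i))) [0..<k] ! i"
      using ik lvs vsn[of i] vsn[of "Suc i"] by simp
  qed
  have Eeq: "E = set (zip vs (tl vs))"
  proof
    show "E \<subseteq> set (zip vs (tl vs))"
    proof
      fix e assume e: "e \<in> E"
      obtain x y where xy: "e = (x,y)" by force
      have "x \<in> set vs" using setV EV e xy by auto
      then obtain i where i: "i \<le> k" "x = a i" using svs by auto
      have "i \<noteq> k" using ak i e xy by force
      hence "i < k" using i by simp
      hence "y = a (Suc i)" using out[of x y "a (Suc i)"] stp[of i] e xy i by simp
      thus "e \<in> set (zip vs (tl vs))" unfolding zipeq using \<open>i < k\<close> xy i by auto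
    qed
    show "set (zip vs (tl vs)) \<subseteq> E" unfolding zipeq using stp by auto
  qed
  have "k \<noteq> 0"
  proof
    assume "k = 0"
    hence "zip vs (tl vs) = []" using zipeq by simp
    thus False using Eeq ne by simp
  qed
  hence len: "length vs \<ge> 2" unfolding vs_def by simp
  have comp: "comp_of E v = V" if "v \<in> V" for v
  proof
    show "comp_of E v \<subseteq> V" unfolding comp_of_def
    proof
      fix u assume "u \<in> {u. (v, u) \<in> (E \<union> E\<inverse>)\<^sup>*}"
      hence "(v, u) \<in> (E \<union> E\<inverse>)\<^sup>*" by simp
      thus "u \<in> V" by (rule closed_reach[of v u E V]) (use that EV in auto)
    qed
    show "V \<subseteq> comp_of E v" using con that by (auto simp: dg_connected_def comp_of_def)
  qed
  have "{e \<in> E. fst e \<in> V} = E" using EV by auto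
  hence "{e \<in> E. fst e \<in> V} = set (zip vs (tl vs))" using Eeq by simp
  hence simple: "is_simple_dpath E V" unfolding is_simple_dpath_def
    by (intro exI[of _ vs]) (simp add: dvs len setV)
  show ?thesis unfolding multipath_def
  proof (intro conjI ballI disjI2)
    show "E \<subseteq> E" by simp
    fix v assume "v \<in> V"
    show "is_simple_dpath E (comp_of E v)" using comp[OF \<open>v \<in> V\<close>] simple by simp
  qed
qed


lemma caseA:
  assumes dg: "digraph V E" and con: "dg_connected V E"
    and out: "\<And>v w1 w2. (v,w1) \<in> E \<Longrightarrow> (v,w2) \<in> E \<Longrightarrow> w1 = w2"
    and inn: "\<And>u1 u2 w. (u1,w) \<in> E \<Longrightarrow> (u2,w) \<in> E \<Longrightarrow> u1 = u2"
    and allout: "fst ` E = V" and ne: "E \<noteq> {}"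
  shows "dg_iso V E (polygon_V (card E - 1)) (polygon_E (card E - 1))"
proof -
  have finV: "finite V" and EV: "E \<subseteq> V \<times> V" using dg by (auto simp: digraph_def)
  define sc where "sc v = (THE w. (v,w) \<in> E)" for v
  have sc: "(v, sc v) \<in> E" if vin: "v \<in> V" for v
  proof -
    have "v \<in> fst ` E" using vin allout by simp
    then obtain e where e: "e \<in> E" "v = fst e" by blast
    obtain w where "(v,w) \<in> E" using e by (metis prod.collapse)
    hence "\<exists>!w. (v,w) \<in> E" using out by blast
    thus ?thesis unfolding sc_def by (rule theI')
  qed
  obtain e0 where e0: "e0 \<in> E" using ne by blast
  define v0 where "v0 = fst e0"
  have v0: "v0 \<in> V" using e0 EV unfolding v0_def by auto
  define a where "a i = (sc ^^ i) v0" for i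
  have aS: "a (Suc i) = sc (a i)" for i by (simp add: a_def)
  have a0: "a 0 = v0" by (simp add: a_def)
  have aV: "a i \<in> V" for i
  proof (induction i)
    case 0 thus ?case using a0 v0 by simp
  next
    case (Suc i) thus ?case using sc[OF Suc] aS EV by auto
  qed
  have stp: "(a i, a (Suc i)) \<in> E" for i using sc[OF aV[of i]] aS by simp
  have exq: "\<exists>q. 0 < q \<and> a q = v0"
  proof -
    have "\<not> inj_on a {0..card V}"
    proof
      assume "inj_on a {0..card V}"
      hence "card (a ` {0..card V}) = Suc (card V)" by (simp add: card_image)
      moreover have "a ` {0..card V} \<subseteq> V" using aV by blast
      ultimately have "Suc (card V) \<le> card V" using card_mono[OF finV] by metis
      thus False by simp
    qed
    then obtain i j where ij: "i \<in> {0..card V}" "j \<in> {0..card V}" "a i = a j" "i \<noteq> j"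
      unfolding inj_on_def by blast
    have "\<exists>i j. i < j \<and> j \<le> card V \<and> a i = a j"
    proof (cases "i < j")
      case True thus ?thesis using ij by auto
    next
      case False hence "j < i" using ij by simp
      thus ?thesis using ij by (intro exI[of _ j] exI[of _ i]) auto
    qed
    then obtain i j where ij2: "i < j" "j \<le> card V" "a i = a j" by blast
    have "a 0 = a (j - i)"
      by (rule seq_back[of E "card V" a i j]) (erule (1) inn, rule stp, (use ij2 in auto))
    thus ?thesis using ij2 a0 by (intro exI[of _ "j - i"]) auto
  qed
  define p where "p = (LEAST q. 0 < q \<and> a q = v0)"
  have pp: "0 < p \<and> a p = v0" unfolding p_def using exq by (rule LeastI_ex)
  have pmin: "a q \<noteq> v0" if "0 < q" "q < p" for q
    using not_less_Least[of q "\<lambda>q. 0 < q \<and> a q = v0"] that unfolding p_def by blast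
  have nf: False if "i < j" "j < p" "a i = a j" for i j
  proof -
    have "a 0 = a (j - i)"
      by (rule seq_back[of E p a i j]) (erule (1) inn, rule stp, (use that in auto))
    moreover have "0 < j - i" "j - i < p" using that by linarith+
    ultimately show False using pmin[of "j - i"] a0 by simp
  qed
  have inj: "inj_on a {0..<p}"
  proof (rule inj_onI)
    fix i j assume "i \<in> {0..<p}" "j \<in> {0..<p}" "a i = a j"
    hence ik: "i < p" "j < p" "a i = a j" by auto
    show "i = j"
    proof (rule ccontr)
      assume "i \<noteq> j"
      hence "i < j \<or> j < i" by linarith
      thus False
      proof
        assume "i < j" thus False using nf[of i j] ik by simp
      next
        assume "j < i" thus False using nf[of j i] ik by simp
      qed
    qed
  qed
  define A where "A = a ` {0..<p}"
  have clo: "x \<in> A \<longleftrightarrow> y \<in> A" if xy: "(x,y) \<in> E" for x y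
  proof
    assume "x \<in> A"
    then obtain i where i: "i < p" "x = a i" unfolding A_def by auto
    hence y: "y = a (Suc i)" using out[of x y "a (Suc i)"] stp[of i] xy by simp
    show "y \<in> A"
    proof (cases "Suc i < p")
      case True thus ?thesis using y unfolding A_def by auto
    next
      case False hence "Suc i = p" using i by simp
      hence "y = a 0" using y pp a0 by simp
      thus ?thesis using pp unfolding A_def by auto
    qed
  next
    assume "y \<in> A"
    then obtain i where i: "i < p" "y = a i" unfolding A_def by auto
    show "x \<in> A"
    proof (cases i)
      case 0
      hence "y = a (Suc (p - 1))" using i pp a0 by simp
      hence "x = a (p - 1)" using inn[of x y "a (p - 1)"] stp[of "p - 1"] xy by simp
      thus ?thesis using pp unfolding A_def by auto
    next
      case (Suc m)
      hence "x = a m" using inn[of x y "a m"] stp[of m] xy i by simp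
      thus ?thesis using Suc i unfolding A_def by auto
    qed
  qed
  have AV: "A = V"
  proof
    show "A \<subseteq> V" unfolding A_def using aV by auto
    show "V \<subseteq> A"
    proof
      fix v assume "v \<in> V"
      hence "(v0,v) \<in> (E \<union> E\<inverse>)\<^sup>*" using con v0 by (simp add: dg_connected_def)
      moreover have "v0 \<in> A" using pp a0 unfolding A_def by force
      ultimately show "v \<in> A" by (rule closed_reach[of v0 v E A]) (erule clo)
    qed
  qed
  have "card A = p" unfolding A_def using card_image[OF inj] by simp
  hence cV: "card V = p" using AV by simp
  have injf: "inj_on fst E"
  proof (rule inj_onI)
    fix e1 e2 assume e: "e1 \<in> E" "e2 \<in> E" "fst e1 = fst e2"
    obtain x1 y1 where 1: "e1 = (x1,y1)" by force
    obtain x2 y2 where 2: "e2 = (x2,y2)" by force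
    show "e1 = e2" using out[of x1 y1 y2] e 1 2 by simp
  qed
  have cE: "card E = p" using card_image[OF injf] allout cV by simp
  have Va: "V = a ` {0..<p}" using AV unfolding A_def by simp
  define h where "h = the_inv_into {0..<p} a"
  have bij: "bij_betw a {0..<p} V" unfolding bij_betw_def using inj AV A_def by simp
  have bijh: "bij_betw h V {0..<p}" unfolding h_def by (rule bij_betw_the_inv_into[OF bij])
  have pV: "polygon_V (p - 1) = {0..<p}" using pp by (auto simp: polygon_V_def)
  have edge: "(a i, a j) \<in> E \<longleftrightarrow> (i, j) \<in> polygon_E (p - 1)" if ij: "i < p" "j < p" for i j
  proof -
    have "(a i, a j) \<in> E \<longleftrightarrow> a j = a (Suc i)" using out[of "a i" "a j" "a (Suc i)"] stp[of i] by auto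
    also have "\<dots> \<longleftrightarrow> (i, j) \<in> polygon_E (p - 1)"
    proof (cases "Suc i < p")
      case True
      have "a j = a (Suc i) \<longleftrightarrow> j = Suc i" using inj True ij unfolding inj_on_def by auto
      thus ?thesis using True by (auto simp: polygon_E_def)
    next
      case False
      hence ip: "i = p - 1" "Suc i = p" using ij by auto
      have "a j = a (Suc i) \<longleftrightarrow> a j = a 0" using ip pp a0 by simp
      also have "\<dots> \<longleftrightarrow> j = 0" using inj ij pp unfolding inj_on_def by auto
      finally show ?thesis using ip by (auto simp: polygon_E_def)
    qed
    finally show ?thesis .
  qed
  have "dg_iso V E (polygon_V (p - 1)) (polygon_E (p - 1))"
    unfolding dg_iso_def
  proof (intro exI[of _ h] conjI ballI)
    show "bij_betw h V (polygon_V (p - 1))" using bijh pV by simp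
    fix u v assume uv: "u \<in> V" "v \<in> V"
    have hu1: "h u \<in> {0..<p}" using bij_betwE[OF bijh] uv by blast
    have "u \<in> a ` {0..<p}" using uv Va by simp
    hence hu2: "a (h u) = u" unfolding h_def by (rule f_the_inv_into_f[OF inj])
    have hu: "h u < p" "a (h u) = u" using hu1 hu2 by auto
    have hv1: "h v \<in> {0..<p}" using bij_betwE[OF bijh] uv by blast
    have "v \<in> a ` {0..<p}" using uv Va by simp
    hence hv2: "a (h v) = v" unfolding h_def by (rule f_the_inv_into_f[OF inj])
    have hv: "h v < p" "a (h v) = v" using hv1 hv2 by auto
    have "(u, v) \<in> E \<longleftrightarrow> (a (h u), a (h v)) \<in> E" by (simp only: hu(2) hv(2))
    also have "\<dots> \<longleftrightarrow> (h u, h v) \<in> polygon_E (p - 1)" by (rule edge[OF hu(1) hv(1)])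
    finally show "(u, v) \<in> E \<longleftrightarrow> (h u, h v) \<in> polygon_E (p - 1)" .
  qed
  thus ?thesis using cE by simp
qed


theorem proposition2p37:
  fixes V :: "'a set" and E :: "('a \<times> 'a) set" and n :: nat
  assumes "digraph V E" and "dg_connected V E"
    and "card E = n" and "n > 2"
    and "inclusion_iso (path_poset V E) (boolean_minus_top n)"
  shows "dg_iso V E (polygon_V (n - 1)) (polygon_E (n - 1))"
proof -
  have finV: "finite V" and EV: "E \<subseteq> V \<times> V" using assms(1) by (auto simp: digraph_def)
  have finE: "finite E" using finV EV by (meson finite_SigmaI finite_subset)
  have Psub: "path_poset V E \<subseteq> Pow E" unfolding path_poset_def multipath_def by blast
  have n2: "n \<ge> 2" using assms(4) by simp
  have PP: "path_poset V E = Pow E - {E}" by (rule poset_char[OF finE assms(3) n2 assms(5) Psub])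
  have sub: "multipath V E F" if "F \<subseteq> E" "F \<noteq> E" for F
  proof -
    have "F \<in> path_poset V E" using PP that by simp
    thus ?thesis unfolding path_poset_def by simp
  qed
  have out: "w1 = w2" if a: "(v,w1) \<in> E" "(v,w2) \<in> E" for v w1 w2
  proof (rule ccontr)
    assume ne: "w1 \<noteq> w2"
    have c2: "card {(v,w1),(v,w2)} = 2" using ne by simp
    have "{(v,w1),(v,w2)} \<noteq> E"
    proof
      assume eq: "{(v,w1),(v,w2)} = E"
      have "card E = 2" using c2 unfolding eq .
      thus False using assms(3,4) by simp
    qed
    moreover have "{(v,w1),(v,w2)} \<subseteq> E" using a by simp
    ultimately have mp: "multipath V E {(v,w1),(v,w2)}" using sub by blast
    have vV: "v \<in> V" using a EV by auto
    have "w1 = w2" by (rule multipath_out_unique[OF mp assms(1) vV]) simp_all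
    thus False using ne by simp
  qed
  have inn: "u1 = u2" if a: "(u1,w) \<in> E" "(u2,w) \<in> E" for u1 u2 w
  proof (rule ccontr)
    assume ne: "u1 \<noteq> u2"
    have c2: "card {(u1,w),(u2,w)} = 2" using ne by simp
    have "{(u1,w),(u2,w)} \<noteq> E"
    proof
      assume eq: "{(u1,w),(u2,w)} = E"
      have "card E = 2" using c2 unfolding eq .
      thus False using assms(3,4) by simp
    qed
    moreover have "{(u1,w),(u2,w)} \<subseteq> E" using a by simp
    ultimately have mp: "multipath V E {(u1,w),(u2,w)}" using sub by blast
    have wV: "w \<in> V" using a EV by auto
    have "u1 = u2" by (rule multipath_in_unique[OF mp assms(1) wV]) simp_all
    thus False using ne by simp
  qed
  have ne: "E \<noteq> {}"
  proof
    assume "E = {}"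
    hence "card E = 0" by simp
    thus False using assms(3,4) by simp
  qed
  have injf: "inj_on fst E"
  proof (rule inj_onI)
    fix e1 e2 assume e: "e1 \<in> E" "e2 \<in> E" "fst e1 = fst e2"
    obtain x1 y1 where 1: "e1 = (x1,y1)" by force
    obtain x2 y2 where 2: "e2 = (x2,y2)" by force
    show "e1 = e2" using out[of x1 y1 y2] e 1 2 by simp
  qed
  have injs: "inj_on snd E"
  proof (rule inj_onI)
    fix e1 e2 assume e: "e1 \<in> E" "e2 \<in> E" "snd e1 = snd e2"
    obtain x1 y1 where 1: "e1 = (x1,y1)" by force
    obtain x2 y2 where 2: "e2 = (x2,y2)" by force
    show "e1 = e2" using inn[of x1 y1 x2] e 1 2 by simp
  qed
  show ?thesis
  proof (cases "fst ` E = V")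
    case True
    have "dg_iso V E (polygon_V (card E - 1)) (polygon_E (card E - 1))"
      by (rule caseA) (fact assms(1), fact assms(2), erule (1) out, erule (1) inn, fact True, fact ne)
    thus ?thesis using assms(3) by simp
  next
    case False
    have "snd ` E \<noteq> V"
    proof
      assume sv: "snd ` E = V"
      have "card (fst ` E) = card V" using card_image[OF injf] card_image[OF injs] sv by simp
      moreover have "fst ` E \<subseteq> V" using EV by auto
      ultimately have "fst ` E = V" using card_subset_eq[OF finV] by blast
      thus False using False by simp
    qed
    moreover have "snd ` E \<subseteq> V" using EV by auto
    ultimately obtain s where s: "s \<in> V" "s \<notin> snd ` E" by blast
    have "multipath V E E"
      by (rule caseB[of V E s]) (fact assms(1), fact assms(2), erule (1) out, erule (1) inn, fact ne, fact s(1), fact s(2))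
    hence "E \<in> path_poset V E" unfolding path_poset_def by simp
    thus ?thesis using PP by simp
  qed
qed

end
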